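(* Let $x=(x_1,\dots,x_n)$ be a sequence of nonzero integers with pairwise distinct absolute values such that $1\in\{x_1,\dots,x_n\}$, and let $tx$ be the sequence obtained from $x$ by replacing the entry $1$ by $-1$. For a sequence $y$ let $a_k(y)=p({}^-y)_1+\dots+p({}^-y)_k$ and $b_k(y)=q({}^-y)_1+\dots+q({}^-y)_k$. Then for all $k\ge1$, $$a_k(x)-a_k(tx)\in\{0,1\},\qquad b_k(x)-b_k(tx)\in\{0,-1\}.$$
   Context: For $y=(y_1,\dots,y_n)$, ${}^-y=(-y_n,\dots,-y_1,y_1,\dots,y_n)$. $p(y)$ is the shape of the Robinson–Schensted tableau of $y$ (row insertion, an inserted entry bumps the leftmost entry strictly greater), and $q(y)$ is the conjugate partition of $p(y)$ (its column lengths); partitions are padded with zeros. *)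

theory Defs
  imports Main
begin

text \<open>A tableau is a list of rows (top row first),
each row a list of integers.\<close>

fun row_insert :: "int list \<Rightarrow> int \<Rightarrow> int list \<times> int option" where
  "row_insert [] v = ([v], None)"
| "row_insert (r # rs) v =
     (if v < r then (v # rs, Some r)
      else (let (rs', b) = row_insert rs v in (r # rs', b)))"

fun rs_insert :: "int list list \<Rightarrow> int \<Rightarrow> int list list" where
  "rs_insert [] v = [[v]]"
| "rs_insert (row # rows) v =
     (case row_insert row v of
        (row', None) \<Rightarrow> row' # rows
      | (row', Some b) \<Rightarrow> row' # rs_insert rows b)"

definition rs_tableau :: "int list \<Rightarrow> int list list" where
  "rs_tableau y = foldl rs_insert [] y"

definition p_shape :: "int list \<Rightarrow> nat \<Rightarrow> nat" where
  "p_shape y i = (let T = rs_tableau y in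
                  if 1 \<le> i \<and> i \<le> length T then length (T ! (i - 1)) else 0)"

definition q_shape :: "int list \<Rightarrow> nat \<Rightarrow> nat" where
  "q_shape y j = (if 1 \<le> j then card {i. 1 \<le> i \<and> p_shape y i \<ge> j} else 0)"

definition neg_double :: "int list \<Rightarrow> int list" where
  "neg_double y = map uminus (rev y) @ y"

definition a_sum :: "nat \<Rightarrow> int list \<Rightarrow> nat" where
  "a_sum k y = (\<Sum>i=1..k. p_shape (neg_double y) i)"

definition b_sum :: "nat \<Rightarrow> int list \<Rightarrow> nat" where
  "b_sum k y = (\<Sum>i=1..k. q_shape (neg_double y) i)"

definition flip_one :: "int list \<Rightarrow> int list" where
  "flip_one x = map (\<lambda>z. if z = 1 then -1 else z) x"

end

theory Submission
  imports Defs "HOL-Library.Multiset"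
begin

definition readw :: "int list list \<Rightarrow> int list" where "readw T = concat (rev T)"

inductive kmove :: "int list \<Rightarrow> int list \<Rightarrow> bool" where
  k1: "x < y \<Longrightarrow> y < z \<Longrightarrow> kmove (al @ [y,x,z] @ be) (al @ [y,z,x] @ be)"
| k2: "x < y \<Longrightarrow> y < z \<Longrightarrow> kmove (al @ [x,z,y] @ be) (al @ [z,x,y] @ be)"

definition keq :: "int list \<Rightarrow> int list \<Rightarrow> bool" where
  "keq = (\<lambda>a b. kmove a b \<or> kmove b a)\<^sup>*\<^sup>*"

lemma kmove_cong: "kmove u u' \<Longrightarrow> kmove (pre @ u @ post) (pre @ u' @ post)"
proof (induction rule: kmove.induct)
  case (k1 x y z al be)
  have "kmove ((pre @ al) @ [y,x,z] @ (be @ post)) ((pre @ al) @ [y,z,x] @ (be @ post))"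
    using k1 kmove.k1 by blast
  then show ?case by simp
next
  case (k2 x y z al be)
  have "kmove ((pre @ al) @ [x,z,y] @ (be @ post)) ((pre @ al) @ [z,x,y] @ (be @ post))"
    using k2 kmove.k2 by blast
  then show ?case by simp
qed

lemma keq_refl[simp]: "keq u u" unfolding keq_def by simp

lemma keq_trans: "keq a b \<Longrightarrow> keq b c \<Longrightarrow> keq a c"
  unfolding keq_def by (rule rtranclp_trans)

lemma keq_sym: "keq a b \<Longrightarrow> keq b a"
  unfolding keq_def
proof (induction rule: rtranclp_induct)
  case base then show ?case by simp
next
  case (step y z)
  then show ?case using converse_rtranclp_into_rtranclp[of "\<lambda>a b. kmove a b \<or> kmove b a" z y a] by auto
qed

lemma keq_cong: "keq u u' \<Longrightarrow> keq (pre @ u @ post) (pre @ u' @ post)"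
  unfolding keq_def
proof (induction rule: rtranclp_induct)
  case base then show ?case by simp
next
  case (step y z)
  have "kmove (pre@y@post) (pre@z@post) \<or> kmove (pre@z@post) (pre@y@post)"
    using step.hyps(2) kmove_cong by blast
  then show ?case using step.IH by (simp add: rtranclp.rtrancl_into_rtrancl)
qed

lemma keq_move: "kmove a b \<Longrightarrow> keq a b"
  unfolding keq_def by auto

lemma kmove_mset: "kmove a b \<Longrightarrow> mset a = mset b"
  by (induction rule: kmove.induct) (simp_all add: add_mset_commute)

lemma keq_mset: "keq a b \<Longrightarrow> mset a = mset b"
  unfolding keq_def
  by (induction rule: rtranclp_induct) (auto dest: kmove_mset)

lemma row_insert_char:
  "row_insert R v = (if \<forall>e\<in>set R. e \<le> v then (R @ [v], None)
     else (takeWhile (\<lambda>e. e \<le> v) R @ v # tl (dropWhile (\<lambda>e. e \<le> v) R),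
           Some (hd (dropWhile (\<lambda>e. e \<le> v) R))))"
  by (induction R) (auto split: prod.splits)

lemma mv1: "sorted_wrt (<) (a # vs) \<Longrightarrow> v < a \<Longrightarrow> keq (a # vs @ [v]) (a # v # vs)"
proof (induction vs arbitrary: a)
  case Nil then show ?case by simp
next
  case (Cons b vs)
  have ab: "a < b" using Cons.prems by simp
  have "keq (b # vs @ [v]) (b # v # vs)" using Cons by auto
  then have 1: "keq ([a] @ (b # vs @ [v]) @ []) ([a] @ (b # v # vs) @ [])" by (rule keq_cong)
  have "kmove ([] @ [a,v,b] @ vs) ([] @ [a,b,v] @ vs)"
    by (rule kmove.k1) (use Cons.prems ab in auto)
  then have 2: "keq (a # b # v # vs) (a # v # b # vs)" by (auto intro: keq_sym keq_move)
  show ?case using keq_trans[OF _ 2] 1 by simp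
qed

lemma mv2: "sorted_wrt (<) (us @ [t]) \<Longrightarrow> t < Y \<Longrightarrow> keq (us @ [Y, t]) (Y # us @ [t])"
proof (induction us arbitrary: t rule: rev_induct)
  case Nil then show ?case by simp
next
  case (snoc s us)
  have st: "s < t" using snoc.prems by (simp add: sorted_wrt_append)
  have "kmove (us @ [s,Y,t] @ []) (us @ [Y,s,t] @ [])"
    by (rule kmove.k2) (use snoc.prems st in auto)
  then have 1: "keq ((us @ [s]) @ [Y, t]) (us @ [Y,s,t])" by (auto intro: keq_move)
  have "keq (us @ [Y, s]) (Y # us @ [s])"
    using snoc.IH[of s] snoc.prems st by (simp add: sorted_wrt_append)
  then have "keq ([] @ (us @ [Y, s]) @ [t]) ([] @ (Y # us @ [s]) @ [t])" by (rule keq_cong)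
  then show ?case using keq_trans[OF 1] by simp
qed

lemma row_keq:
  assumes s: "sorted_wrt (<) R" and nv: "v \<notin> set R" and ri: "row_insert R v = (R', Some y)"
  shows "keq (R @ [v]) (y # R')"
proof -
  define u where "u = takeWhile (\<lambda>e. e \<le> v) R"
  define d where "d = dropWhile (\<lambda>e. e \<le> v) R"
  have ne: "\<not> (\<forall>e\<in>set R. e \<le> v)" using ri by (auto simp: row_insert_char split: if_splits)
  then have dne: "d \<noteq> []" unfolding d_def by auto
  then obtain vv where dd: "d = y # vv" using ri ne
    by (cases d) (auto simp: row_insert_char d_def)
  have R'eq: "R' = u @ v # vv" using ri ne dd by (auto simp: row_insert_char u_def d_def)
  have Req: "R = u @ y # vv" using dd unfolding u_def d_def by (metis takeWhile_dropWhile_id)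
  have yv: "v < y" using dd unfolding d_def
    by (metis dropWhile_eq_Cons_conv not_le)
  have uv: "\<forall>e\<in>set u. e < v" using nv unfolding u_def
    by (metis Req le_less set_takeWhileD u_def)
  have sR: "sorted_wrt (<) (u @ y # vv)" using s Req by simp
  have 1: "keq (y # vv @ [v]) (y # v # vv)"
    by (rule mv1) (use sR yv in \<open>auto simp: sorted_wrt_append\<close>)
  have 2: "keq (u @ [y, v]) (y # u @ [v])"
    by (rule mv2) (use sR uv yv in \<open>auto simp: sorted_wrt_append\<close>)
  have "keq (u @ (y # vv @ [v]) @ []) (u @ (y # v # vv) @ [])" using keq_cong[OF 1] .
  moreover have "keq ([] @ (u @ [y, v]) @ vv) ([] @ (y # u @ [v]) @ vv)" using keq_cong[OF 2] .
  ultimately have "keq (u @ y # vv @ [v]) (y # u @ v # vv)"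
    using keq_trans by fastforce
  then show ?thesis using Req R'eq by simp
qed

lemma row_insert_None: "row_insert R v = (R', None) \<Longrightarrow> R' = R @ [v]"
  by (auto simp: row_insert_char split: if_splits)

lemma row_insert_Some_mem: "row_insert R v = (R', Some y) \<Longrightarrow> y \<in> set R"
  apply (auto simp: row_insert_char split: if_splits)
  by (metis dropWhile_eq_Nil_conv hd_in_set set_dropWhileD)

lemma rs_keq:
  "(\<forall>r\<in>set T. sorted_wrt (<) r) \<Longrightarrow> distinct (concat T) \<Longrightarrow> v \<notin> set (concat T)
   \<Longrightarrow> keq (readw (rs_insert T v)) (readw T @ [v])"
proof (induction T arbitrary: v)
  case Nil then show ?case by (simp add: readw_def)
next
  case (Cons r rs)
  show ?case
  proof (cases "row_insert r v")
    case (Pair r' b)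
    show ?thesis
    proof (cases b)
      case None
      then show ?thesis using Pair row_insert_None[of r v r'] by (simp add: readw_def)
    next
      case (Some y)
      have ym: "y \<in> set r" using Pair Some row_insert_Some_mem by blast
      have yn: "y \<notin> set (concat rs)" using Cons.prems(2) ym by auto
      have IH: "keq (readw (rs_insert rs y)) (readw rs @ [y])"
        using Cons.IH[of y] Cons.prems yn by auto
      have rk: "keq (r @ [v]) (y # r')"
        using row_keq[of r v r' y] Cons.prems Pair Some by auto
      have "keq (readw (rs_insert rs y) @ r') (readw rs @ [y] @ r')"
        using keq_cong[OF IH, of "[]" r'] by simp
      moreover have "keq (readw rs @ (y # r') @ []) (readw rs @ (r @ [v]) @ [])"
        using keq_cong[OF keq_sym[OF rk]] .
      ultimately have "keq (readw (rs_insert rs y) @ r') (readw rs @ r @ [v])"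
        using keq_trans by fastforce
      then show ?thesis using Pair Some by (simp add: readw_def)
    qed
  qed
qed

fun above :: "int list \<Rightarrow> int list list \<Rightarrow> bool" where
  "above p [] = True"
| "above p (r # rs) = (length r \<le> length p \<and> (\<forall>j<length r. p!j < r!j))"

fun tab :: "int list list \<Rightarrow> bool" where
  "tab [] = True"
| "tab (r # rs) = (r \<noteq> [] \<and> sorted_wrt (<) r \<and> above r rs \<and> tab rs)"

lemma ri_some:
  assumes "row_insert R v = (R', Some y)"
  shows "\<exists>t<length R. R' = R[t:=v] \<and> y = R!t \<and> v < y \<and> (\<forall>j<t. R!j \<le> v)"
proof -
  define tw where "tw = takeWhile (\<lambda>e. e \<le> v) R"
  define dw where "dw = dropWhile (\<lambda>e. e \<le> v) R"
  have ne: "\<not> (\<forall>e\<in>set R. e \<le> v)" using assms by (auto simp: row_insert_char split: if_splits)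
  then have dne: "dw \<noteq> []" unfolding dw_def by auto
  have R: "R = tw @ dw" unfolding tw_def dw_def by simp
  have R': "R' = tw @ v # tl dw" and y: "y = hd dw"
    using assms ne by (auto simp: row_insert_char tw_def dw_def)
  have vy: "v < hd dw" using dne unfolding dw_def
    by (metis dropWhile_eq_Nil_conv hd_dropWhile not_le)
  show ?thesis
  proof (intro exI conjI)
    show "length tw < length R" using R dne by simp
    show "R' = R[length tw := v]" using R R' dne by (cases dw) (auto simp: list_update_append)
    show "y = R ! length tw" using R y dne by (cases dw) auto
    show "v < y" using y vy by simp
    show "\<forall>j<length tw. R ! j \<le> v"
    proof (intro allI impI)
      fix j assume j: "j < length tw"
      have "R!j = tw!j" using j by (subst R) (simp add: nth_append)
      moreover have "tw!j \<in> set tw" using j by simp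
      ultimately show "R ! j \<le> v" unfolding tw_def by (metis set_takeWhileD)
    qed
  qed
qed

lemma sorted_update:
  fixes R :: "int list"
  assumes "sorted_wrt (<) R" "t < length R" "\<forall>j<t. R!j < v" "v < R!t"
  shows "sorted_wrt (<) (R[t:=v])"
proof -
  have s: "\<And>i j. i < j \<Longrightarrow> j < length R \<Longrightarrow> R!i < R!j"
    using assms(1) by (simp add: sorted_wrt_iff_nth_less)
  show ?thesis unfolding sorted_wrt_iff_nth_less
  proof (intro allI impI)
    fix i j assume ij: "i < j" "j < length (R[t:=v])"
    show "R[t := v] ! i < R[t := v] ! j"
      using ij assms s[of i j] s[of t j] by (auto simp: nth_list_update intro: less_trans)
  qed
qed

lemma sorted_nth_le: "sorted_wrt (<) (p::int list) \<Longrightarrow> i \<le> j \<Longrightarrow> j < length p \<Longrightarrow> p!i \<le> p!j"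
  by (metis le_less sorted_wrt_iff_nth_less)

lemma col_lemma:
  "tab rows \<Longrightarrow> distinct (concat rows) \<Longrightarrow> v \<notin> set (concat rows) \<Longrightarrow> sorted_wrt (<) p
   \<Longrightarrow> p \<noteq> [] \<Longrightarrow> above p rows \<Longrightarrow> j0 < length p \<Longrightarrow> p!j0 < v
   \<Longrightarrow> (\<forall>r rs. rows = r # rs \<longrightarrow> j0 < length r \<longrightarrow> v < r!j0) \<Longrightarrow> tab (p # rs_insert rows v)"
proof (induction rows arbitrary: p v j0)
  case Nil
  have "p!0 \<le> p!j0" using Nil sorted_nth_le[of p 0 j0] by auto
  then show ?case using Nil by auto
next
  case (Cons r1 rest)
  obtain r' b where rb: "row_insert r1 v = (r', b)" by fastforce
  show ?case
  proof (cases b)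
    case None
    have r': "r' = r1 @ [v]" using rb None row_insert_None by blast
    have all: "\<forall>e\<in>set r1. e \<le> v" using rb None by (auto simp: row_insert_char split: if_splits)
    have lt: "\<forall>e\<in>set r1. e < v" using all Cons.prems(3) by (auto simp: le_less)
    have "length r1 \<le> j0"
    proof (rule ccontr)
      assume "\<not> length r1 \<le> j0"
      then have "v < r1!j0" using Cons.prems(9) by auto
      moreover have "r1!j0 \<in> set r1" using \<open>\<not> length r1 \<le> j0\<close> by auto
      ultimately show False using all by force
    qed
    have pv: "\<And>j. j \<le> j0 \<Longrightarrow> p!j < v"
      using sorted_nth_le[of p _ j0] Cons.prems(4,7,8) by fastforce
    have abp: "above p (r' # rest)"
      using Cons.prems(6) \<open>length r1 \<le> j0\<close> Cons.prems(7) pv r'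
      by (auto simp: nth_append less_Suc_eq)
    have abr: "above r' rest"
      using Cons.prems(1) r' by (cases rest) (auto simp: nth_append)
    have sr: "sorted_wrt (<) r'" using Cons.prems(1) lt r' by (auto simp: sorted_wrt_append)
    show ?thesis using rb None r' abp abr sr Cons.prems by auto
  next
    case (Some y)
    obtain t where t: "t < length r1" "r' = r1[t:=v]" "y = r1!t" "v < y" "\<forall>j<t. r1!j \<le> v"
      using ri_some[OF rb[unfolded Some]] by blast
    have tj: "t \<le> j0"
    proof (rule ccontr)
      assume "\<not> t \<le> j0"
      then have "j0 < length r1" using t by auto
      then have "v < r1!j0" using Cons.prems(9) by auto
      moreover have "r1!j0 \<le> v" using t(5) \<open>\<not> t \<le> j0\<close> by auto
      ultimately show False by simp
    qed
    have sr1: "sorted_wrt (<) r1" and ne1: "r1 \<noteq> []" using Cons.prems(1) by auto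
    have tlt: "\<forall>j<t. r1!j < v"
    proof (intro allI impI)
      fix j assume "j < t"
      then have "r1!j \<in> set r1" "r1!j \<le> v" using t by auto
      then show "r1!j < v" using Cons.prems(3) by (auto simp: le_less)
    qed
    have sr': "sorted_wrt (<) r'" using sorted_update[OF sr1 t(1) tlt] t by simp
    have le': "\<And>j. j < length r1 \<Longrightarrow> r'!j \<le> r1!j" using t by (auto simp: nth_list_update)
    have ym: "y \<in> set r1" using t by simp
    have yn: "y \<notin> set (concat rest)" using Cons.prems(2) ym by auto
    have abr': "above r' rest"
    proof (cases rest)
      case Nil then show ?thesis by simp
    next
      case (Cons r2 rs2)
      have ab1: "above r1 (r2 # rs2)" using Cons.prems(1) \<open>rest = r2 # rs2\<close> by simp
      have "\<forall>j<length r2. r'!j < r2!j"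
      proof (intro allI impI)
        fix j assume "j < length r2"
        then have "j < length r1" "r1!j < r2!j" using ab1 by auto
        then show "r'!j < r2!j" using le'[of j] by simp
      qed
      then show ?thesis using ab1 t(2) \<open>rest = r2 # rs2\<close> by simp
    qed
    have cond: "\<forall>r rs. rest = r # rs \<longrightarrow> t < length r \<longrightarrow> y < r!t"
      using Cons.prems(1) t by auto
    have IH: "tab (r' # rs_insert rest y)"
      by (rule Cons.IH) (use Cons.prems t sr' abr' yn cond in auto)
    have pv: "p!t < v"
      using sorted_nth_le[of p t j0] Cons.prems(4,7,8) tj by fastforce
    have abp: "above p (r' # rs_insert rest y)"
      using Cons.prems(6) t pv by (auto simp: nth_list_update)
    show ?thesis using rb Some IH abp Cons.prems by auto
  qed
qed

lemma tab_insert: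
  assumes "tab T" "distinct (concat T)" "v \<notin> set (concat T)"
  shows "tab (rs_insert T v)"
proof (cases T)
  case Nil then show ?thesis by simp
next
  case (Cons r1 rest)
  obtain r' b where rb: "row_insert r1 v = (r', b)" by fastforce
  show ?thesis
  proof (cases b)
    case None
    have r': "r' = r1 @ [v]" using rb None row_insert_None by blast
    have all: "\<forall>e\<in>set r1. e \<le> v" using rb None by (auto simp: row_insert_char split: if_splits)
    have lt: "\<forall>e\<in>set r1. e < v" using all assms(3) Cons by (auto simp: le_less)
    have abr: "above r' rest"
      using assms(1) Cons r' by (cases rest) (auto simp: nth_append)
    have sr: "sorted_wrt (<) r'" using assms(1) Cons lt r' by (auto simp: sorted_wrt_append)
    show ?thesis using rb None r' abr sr assms Cons by auto
  next
    case (Some y)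
    obtain t where t: "t < length r1" "r' = r1[t:=v]" "y = r1!t" "v < y" "\<forall>j<t. r1!j \<le> v"
      using ri_some[OF rb[unfolded Some]] by blast
    have sr1: "sorted_wrt (<) r1" using assms(1) Cons by auto
    have tlt: "\<forall>j<t. r1!j < v"
    proof (intro allI impI)
      fix j assume "j < t"
      then have "r1!j \<in> set r1" "r1!j \<le> v" using t by auto
      then show "r1!j < v" using assms(3) Cons by (auto simp: le_less)
    qed
    have sr': "sorted_wrt (<) r'" using sorted_update[OF sr1 t(1) tlt] t by simp
    have le': "\<And>j. j < length r1 \<Longrightarrow> r'!j \<le> r1!j" using t by (auto simp: nth_list_update)
    have ym: "y \<in> set r1" using t by simp
    have yn: "y \<notin> set (concat rest)" using assms(2) Cons ym by auto
    have abr': "above r' rest"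
    proof (cases rest)
      case Nil then show ?thesis by simp
    next
      case (Cons r2 rs2)
      have ab1: "above r1 (r2 # rs2)" using assms(1) \<open>T = r1 # rest\<close> \<open>rest = r2 # rs2\<close> by simp
      have "\<forall>j<length r2. r'!j < r2!j"
      proof (intro allI impI)
        fix j assume "j < length r2"
        then have "j < length r1" "r1!j < r2!j" using ab1 by auto
        then show "r'!j < r2!j" using le'[of j] by simp
      qed
      then show ?thesis using ab1 t(2) \<open>rest = r2 # rs2\<close> by simp
    qed
    have cond: "\<forall>r rs. rest = r # rs \<longrightarrow> t < length r \<longrightarrow> y < r!t"
      using assms(1) Cons t by auto
    have "tab (r' # rs_insert rest y)"
      by (rule col_lemma) (use assms Cons t sr' abr' yn cond in auto)
    then show ?thesis using rb Some Cons by simp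
  qed
qed

lemma mset_readw: "mset (readw T) = mset (concat T)"
  by (induction T) (auto simp: readw_def)

lemma rs_invariant:
  assumes "distinct w"
  shows "tab (rs_tableau w) \<and> distinct (concat (rs_tableau w)) \<and> mset (concat (rs_tableau w)) = mset w
         \<and> keq (readw (rs_tableau w)) w"
  using assms
proof (induction w rule: rev_induct)
  case Nil then show ?case by (simp add: rs_tableau_def readw_def)
next
  case (snoc v w)
  define T where "T = rs_tableau w"
  have IH: "tab T" "distinct (concat T)" "mset (concat T) = mset w" "keq (readw T) w"
    using snoc by (auto simp: T_def)
  have "set (concat T) = set w" using arg_cong[OF IH(3), of set_mset] by simp
  then have vn: "v \<notin> set (concat T)" using snoc.prems by simp
  have eq: "rs_tableau (w @ [v]) = rs_insert T v" by (simp add: rs_tableau_def T_def)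
  have rows: "\<forall>r\<in>set T. sorted_wrt (<) r"
    using IH(1) by (induction T rule: tab.induct) auto
  have k: "keq (readw (rs_insert T v)) (readw T @ [v])"
    using rs_keq[OF rows IH(2) vn] .
  have k2: "keq (readw T @ [v]) (w @ [v])" using keq_cong[OF IH(4), of "[]" "[v]"] by simp
  have ms: "mset (concat (rs_insert T v)) = mset (w @ [v])"
    using keq_mset[OF k] IH(3) by (simp add: mset_readw)
  have ds: "distinct (concat (rs_insert T v))"
  proof -
    have "set (concat (rs_insert T v)) = set (w @ [v])" using arg_cong[OF ms, of set_mset] by simp
    moreover have "length (concat (rs_insert T v)) = length (w @ [v])" using mset_eq_length[OF ms] .
    ultimately show ?thesis using snoc.prems by (metis card_distinct distinct_card)
  qed
  show ?case using tab_insert[OF IH(1,2) vn] ms ds keq_trans[OF k k2] eq by simp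
qed

definition valid :: "int list \<Rightarrow> nat \<Rightarrow> nat set \<Rightarrow> (nat \<Rightarrow> nat) \<Rightarrow> bool" where
  "valid w k S c \<longleftrightarrow> S \<subseteq> {..<length w} \<and> (\<forall>i\<in>S. c i < k) \<and>
     (\<forall>i\<in>S. \<forall>j\<in>S. i < j \<and> c i = c j \<longrightarrow> w!i < w!j)"

definition G :: "nat \<Rightarrow> int list \<Rightarrow> nat" where
  "G k w = Max {card S | S. \<exists>c. valid w k S c}"

lemma valid_fin: "valid w k S c \<Longrightarrow> finite S"
  unfolding valid_def using finite_subset by blast

lemma G_set_fin: "finite {card S | S. \<exists>c. valid w k S c}"
proof -
  have "{card S | S. \<exists>c. valid w k S c} \<subseteq> {..length w}"
  proof
    fix n assume "n \<in> {card S | S. \<exists>c. valid w k S c}"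
    then obtain S c where "n = card S" "valid w k S c" by blast
    then have "S \<subseteq> {..<length w}" by (simp add: valid_def)
    then have "card S \<le> length w" by (metis card_lessThan card_mono finite_lessThan)
    then show "n \<in> {..length w}" using \<open>n = card S\<close> by simp
  qed
  then show ?thesis using finite_subset by blast
qed

lemma G_ge: "valid w k S c \<Longrightarrow> card S \<le> G k w"
  unfolding G_def by (rule Max_ge[OF G_set_fin]) blast

lemma G_ex: "\<exists>S c. valid w k S c \<and> card S = G k w"
proof -
  have "valid w k {} (\<lambda>_. 0)" by (simp add: valid_def)
  then have ne: "{card S | S. \<exists>c. valid w k S c} \<noteq> {}" by blast
  have "G k w \<in> {card S | S. \<exists>c. valid w k S c}"
    unfolding G_def by (rule Max_in[OF G_set_fin ne])
  then show ?thesis by auto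
qed

definition sw :: "nat \<Rightarrow> nat \<Rightarrow> nat" where
  "sw p i = (if i = p then Suc p else if i = Suc p then p else i)"

lemma sw_sw[simp]: "sw p (sw p i) = i" by (simp add: sw_def)
lemma sw_inj: "inj (sw p)" by (metis injI sw_sw)
lemma sw_order: "sw p a < sw p b \<Longrightarrow> a < b \<or> (a = Suc p \<and> b = p)"
  by (auto simp: sw_def split: if_splits)
lemma sw_lt: "Suc p < n \<Longrightarrow> i < n \<Longrightarrow> sw p i < n" by (auto simp: sw_def)

lemma transport_valid:
  assumes v: "valid w k S c" and nb: "\<not> (p \<in> S \<and> Suc p \<in> S \<and> c p = c (Suc p))"
    and l: "length w' = length w" "Suc p < length w"
    and e: "\<forall>i<length w. w'!i = w!(sw p i)"
  shows "valid w' k (sw p ` S) (c \<circ> sw p)"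
  unfolding valid_def
proof (intro conjI ballI impI)
  show "sw p ` S \<subseteq> {..<length w'}" using v l sw_lt by (auto simp: valid_def)
next
  fix i assume "i \<in> sw p ` S"
  then show "(c \<circ> sw p) i < k" using v by (auto simp: valid_def)
next
  fix i j assume ij: "i \<in> sw p ` S" "j \<in> sw p ` S" "i < j \<and> (c \<circ> sw p) i = (c \<circ> sw p) j"
  obtain a b where ab: "a \<in> S" "b \<in> S" "i = sw p a" "j = sw p b" using ij by blast
  have cab: "c a = c b" using ij ab by simp
  have "a < b \<or> (a = Suc p \<and> b = p)" using sw_order ij ab by simp
  then have "a < b" using nb ab cab by auto
  then have "w!a < w!b" using v ab cab by (auto simp: valid_def)
  moreover have "a < length w" "b < length w" using v ab by (auto simp: valid_def)
  ultimately show "w'!i < w'!j" using e ab l sw_lt[of p "length w"] by auto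
qed

lemma transport_G:
  assumes fx: "\<And>S c. valid w k S c \<Longrightarrow> \<exists>S' c'. valid w k S' c' \<and> card S \<le> card S'
                  \<and> \<not> (p \<in> S' \<and> Suc p \<in> S' \<and> c' p = c' (Suc p))"
    and l: "length w' = length w" "Suc p < length w"
    and e: "\<forall>i<length w. w'!i = w!(sw p i)"
  shows "G k w \<le> G k w'"
proof -
  obtain S c where Sc: "valid w k S c" "card S = G k w" using G_ex by blast
  obtain S' c' where S': "valid w k S' c'" "card S \<le> card S'"
      "\<not> (p \<in> S' \<and> Suc p \<in> S' \<and> c' p = c' (Suc p))" using fx[OF Sc(1)] by blast
  have "valid w' k (sw p ` S') (c' \<circ> sw p)" using transport_valid[OF S'(1) S'(3) l e] .
  then have "card (sw p ` S') \<le> G k w'" by (rule G_ge)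
  moreover have "card (sw p ` S') = card S'" using sw_inj by (simp add: card_image inj_on_def)
  ultimately show ?thesis using Sc S' by simp
qed

lemma fix_trivial:
  assumes "w!(Suc p) < w!p" "valid w k S c"
  shows "\<exists>S' c'. valid w k S' c' \<and> card S \<le> card S' \<and> \<not> (p \<in> S' \<and> Suc p \<in> S' \<and> c' p = c' (Suc p))"
proof -
  have "\<not> (p \<in> S \<and> Suc p \<in> S \<and> c p = c (Suc p))"
  proof
    assume h: "p \<in> S \<and> Suc p \<in> S \<and> c p = c (Suc p)"
    then have "w!p < w!(Suc p)" using assms(2) unfolding valid_def by blast
    then show False using assms(1) by simp
  qed
  then show ?thesis using assms(2) by blast
qed

definition swc :: "nat \<Rightarrow> nat \<Rightarrow> nat \<Rightarrow> nat" where
  "swc a b g = (if g = a then b else if g = b then a else g)"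

lemma recolor:
  assumes v: "valid w k S c" and ab: "a < k" "b < k" "a \<noteq> b"
    and cross1: "\<And>i j. i \<in> S \<Longrightarrow> j \<in> S \<Longrightarrow> i \<le> q \<Longrightarrow> q < j \<Longrightarrow> c i = a \<Longrightarrow> c j = b \<Longrightarrow> w!i < w!j"
    and cross2: "\<And>i j. i \<in> S \<Longrightarrow> j \<in> S \<Longrightarrow> i \<le> q \<Longrightarrow> q < j \<Longrightarrow> c i = b \<Longrightarrow> c j = a \<Longrightarrow> w!i < w!j"
  shows "valid w k S (\<lambda>i. if q < i then swc a b (c i) else c i)"
  unfolding valid_def
proof (intro conjI ballI impI)
  show "S \<subseteq> {..<length w}" using v by (simp add: valid_def)
next
  fix i assume "i \<in> S"
  then show "(if q < i then swc a b (c i) else c i) < k" using v ab by (auto simp: valid_def swc_def)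
next
  fix i j assume ij: "i \<in> S" "j \<in> S"
    "i < j \<and> (if q < i then swc a b (c i) else c i) = (if q < j then swc a b (c j) else c j)"
  have old: "c i = c j \<Longrightarrow> w!i < w!j" using v ij by (auto simp: valid_def)
  show "w!i < w!j"
  proof (cases "q < i")
    case True
    then have "q < j" using ij by simp
    then have "swc a b (c i) = swc a b (c j)" using ij True by simp
    then have "c i = c j" by (auto simp: swc_def split: if_splits)
    then show ?thesis using old by simp
  next
    case False
    show ?thesis
    proof (cases "q < j")
      case False
      then show ?thesis using ij \<open>\<not> q < i\<close> old by simp
    next
      case True
      have e: "c i = swc a b (c j)" using ij True \<open>\<not> q < i\<close> by simp
      show ?thesis
      proof (cases "c j = a")
        case True
        then show ?thesis using e cross2 ij \<open>q < j\<close> \<open>\<not> q < i\<close> by (simp add: swc_def)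
      next
        case ja: False
        show ?thesis
        proof (cases "c j = b")
          case True
          then show ?thesis using e cross1 ij \<open>q < j\<close> \<open>\<not> q < i\<close> ja ab by (simp add: swc_def)
        next
          case False
          then have "c i = c j" using e ja by (simp add: swc_def)
          then show ?thesis using old by simp
        qed
      qed
    qed
  qed
qed

lemma valid_pair: "valid w k S c \<Longrightarrow> i \<in> S \<Longrightarrow> j \<in> S \<Longrightarrow> i < j \<Longrightarrow> c i = c j \<Longrightarrow> w!i < w!j"
  unfolding valid_def by blast

lemma card_swap_elem: "finite S \<Longrightarrow> a \<in> S \<Longrightarrow> b \<notin> S \<Longrightarrow> card (insert b (S - {a})) = card S"
  by (metis card.insert card_Suc_Diff1 finite_Diff insert_Diff insert_iff)

lemma fix1:
  assumes len: "Suc (Suc m) < length w" and xy: "w!(Suc m) < w!m" and yz: "w!m < w!(Suc (Suc m))"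
    and v: "valid w k S c"
  shows "\<exists>S' c'. valid w k S' c' \<and> card S \<le> card S' \<and>
           \<not> (Suc m \<in> S' \<and> Suc (Suc m) \<in> S' \<and> c' (Suc m) = c' (Suc (Suc m)))"
proof (cases "Suc m \<in> S \<and> Suc (Suc m) \<in> S \<and> c (Suc m) = c (Suc (Suc m))")
  case False
  then show ?thesis using v by blast
next
  case bad: True
  have vv: "\<And>i j. i\<in>S \<Longrightarrow> j \<in>S \<Longrightarrow> i<j \<Longrightarrow> c i = c j \<Longrightarrow> w!i < w!j"
    using valid_pair[OF v] by blast
  have fin: "finite S" using valid_fin[OF v] .
  show ?thesis
  proof (cases "m \<in> S")
    case False
    define S' where "S' = insert m (S - {Suc m})"
    define c' where "c' = c(m := c (Suc m))"
    have "valid w k S' c'"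
      unfolding valid_def
    proof (intro conjI ballI impI)
      show "S' \<subseteq> {..<length w}" using v len by (auto simp: valid_def S'_def)
    next
      fix i assume "i \<in> S'" then show "c' i < k" using v bad by (auto simp: valid_def S'_def c'_def)
    next
      fix i j assume ij: "i \<in> S'" "j \<in> S'" "i < j \<and> c' i = c' j"
      show "w!i < w!j"
      proof (cases "i = m")
        case True
        have jm: "j \<noteq> m" "m < j" using ij True by auto
        have j12: "j \<in> S" "j \<noteq> Suc m" using ij(2) jm unfolding S'_def by auto
        have "c j = c (Suc m)" using ij True jm unfolding c'_def by simp
        note j = j12 jm(2) this
        show ?thesis
        proof (cases "j = Suc (Suc m)")
          case True then show ?thesis using yz \<open>i = m\<close> by simp
        next
          case False
          then have "w!(Suc (Suc m)) < w!j" using vv[of "Suc (Suc m)" j] bad j by simp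
          then show ?thesis using yz \<open>i = m\<close> by simp
        qed
      next
        case False
        show ?thesis
        proof (cases "j = m")
          case True
          have im: "i \<noteq> m" "i < m" using ij True False by auto
          have i1: "i \<in> S" using ij(1) im unfolding S'_def by auto
          have "c i = c (Suc m)" using ij True im unfolding c'_def by simp
          note i = i1 this im(2)
          then have "w!i < w!(Suc m)" using vv[of i "Suc m"] bad by simp
          then show ?thesis using xy True by simp
        next
          case False
          then have "i \<in> S" "j \<in> S" using ij \<open>i \<noteq> m\<close> unfolding S'_def by auto
          moreover have "c i = c j" using ij \<open>i \<noteq> m\<close> \<open>j \<noteq> m\<close> unfolding c'_def by simp
          ultimately have "i \<in> S" "j \<in> S" "c i = c j" by auto
          then show ?thesis using ij vv by blast
        qed
      qed
    qed
    moreover have "card S' = card S" unfolding S'_def using card_swap_elem[OF fin] bad False by simp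
    moreover have "Suc m \<notin> S'" by (simp add: S'_def)
    ultimately show ?thesis by (intro exI[of _ S'] exI[of _ c']) simp
  next
    case True
    define a where "a = c (Suc m)"
    define b where "b = c m"
    have ab: "a \<noteq> b"
    proof
      assume "a = b"
      then have "w!m < w!(Suc m)" using vv[of m "Suc m"] True bad by (simp add: a_def b_def)
      then show False using xy by simp
    qed
    have ak: "a < k" "b < k" using v bad True by (auto simp: valid_def a_def b_def)
    have V: "valid w k S (\<lambda>i. if Suc m < i then swc a b (c i) else c i)"
    proof (rule recolor[OF v ak ab])
      fix i j assume h: "i \<in> S" "j \<in> S" "i \<le> Suc m" "Suc m < j" "c i = a" "c j = b"
      have "w!i \<le> w!(Suc m)"
        using h vv[of i "Suc m"] bad by (cases "i = Suc m") (auto simp: a_def)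
      moreover have "w!m < w!j" using h vv[of m j] True by (simp add: b_def)
      ultimately show "w!i < w!j" using xy by simp
    next
      fix i j assume h: "i \<in> S" "j \<in> S" "i \<le> Suc m" "Suc m < j" "c i = b" "c j = a"
      have "i \<noteq> Suc m" using h ab by (auto simp: a_def)
      then have "w!i \<le> w!m"
        using h vv[of i m] True by (cases "i = m") (auto simp: b_def)
      moreover have "w!(Suc (Suc m)) \<le> w!j"
        using h vv[of "Suc (Suc m)" j] bad by (cases "j = Suc (Suc m)") (auto simp: a_def)
      ultimately show "w!i < w!j" using yz by simp
    qed
    moreover have "(\<lambda>i. if Suc m < i then swc a b (c i) else c i) (Suc m) \<noteq>
                   (\<lambda>i. if Suc m < i then swc a b (c i) else c i) (Suc (Suc m))"
      using bad ab by (simp add: swc_def a_def)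
    ultimately show ?thesis by (intro exI[of _ S] exI[of _ "(\<lambda>i. if Suc m < i then swc a b (c i) else c i)"]) simp
  qed
qed

lemma fix2:
  assumes len: "Suc (Suc m) < length w" and xy: "w!m < w!(Suc (Suc m))" and yz: "w!(Suc (Suc m)) < w!(Suc m)"
    and v: "valid w k S c"
  shows "\<exists>S' c'. valid w k S' c' \<and> card S \<le> card S' \<and>
           \<not> (m \<in> S' \<and> Suc m \<in> S' \<and> c' m = c' (Suc m))"
proof (cases "m \<in> S \<and> Suc m \<in> S \<and> c m = c (Suc m)")
  case False
  then show ?thesis using v by blast
next
  case bad: True
  have vv: "\<And>i j. i\<in>S \<Longrightarrow> j \<in>S \<Longrightarrow> i<j \<Longrightarrow> c i = c j \<Longrightarrow> w!i < w!j"
    using valid_pair[OF v] by blast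
  have fin: "finite S" using valid_fin[OF v] .
  show ?thesis
  proof (cases "Suc (Suc m) \<in> S")
    case False
    define S' where "S' = insert (Suc (Suc m)) (S - {Suc m})"
    define c' where "c' = c(Suc (Suc m) := c m)"
    have "valid w k S' c'"
      unfolding valid_def
    proof (intro conjI ballI impI)
      show "S' \<subseteq> {..<length w}" using v len by (auto simp: valid_def S'_def)
    next
      fix i assume "i \<in> S'" then show "c' i < k" using v bad by (auto simp: valid_def S'_def c'_def)
    next
      fix i j assume ij: "i \<in> S'" "j \<in> S'" "i < j \<and> c' i = c' j"
      show "w!i < w!j"
      proof (cases "i = Suc (Suc m)")
        case True
        have jm: "j \<noteq> Suc (Suc m)" "Suc (Suc m) < j" using ij True by auto
        have j1: "j \<in> S" using ij(2) jm unfolding S'_def by auto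
        have "c j = c m" using ij True jm unfolding c'_def by simp
        note j = j1 jm(2) this
        then have "w!(Suc m) < w!j" using vv[of "Suc m" j] bad by simp
        then show ?thesis using yz True by simp
      next
        case False
        show ?thesis
        proof (cases "j = Suc (Suc m)")
          case True
          have im: "i \<noteq> Suc (Suc m)" "i < Suc (Suc m)" using ij True False by auto
          have i1: "i \<in> S" "i \<noteq> Suc m" using ij(1) im unfolding S'_def by auto
          have "c i = c m" using ij True im unfolding c'_def by simp
          note i = i1(1) this im(2) i1(2)
          then have "i \<le> m" by simp
          then have "w!i \<le> w!m" using vv[of i m] bad i by (cases "i = m") auto
          then show ?thesis using xy True by simp
        next
          case False
          then have "i \<in> S" "j \<in> S" using ij \<open>i \<noteq> Suc (Suc m)\<close> unfolding S'_def by auto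
          moreover have "c i = c j" using ij \<open>i \<noteq> Suc (Suc m)\<close> \<open>j \<noteq> Suc (Suc m)\<close> unfolding c'_def by simp
          ultimately have "i \<in> S" "j \<in> S" "c i = c j" by auto
          then show ?thesis using ij vv by blast
        qed
      qed
    qed
    moreover have "card S' = card S" unfolding S'_def using card_swap_elem[OF fin] bad False by simp
    moreover have "Suc m \<notin> S'" by (simp add: S'_def)
    ultimately show ?thesis by (intro exI[of _ S'] exI[of _ c']) simp
  next
    case True
    define a where "a = c m"
    define b where "b = c (Suc (Suc m))"
    have ab: "a \<noteq> b"
    proof
      assume "a = b"
      then have "w!(Suc m) < w!(Suc (Suc m))" using vv[of "Suc m" "Suc (Suc m)"] True bad
        by (simp add: a_def b_def)
      then show False using yz by simp
    qed
    have ak: "a < k" "b < k" using v bad True by (auto simp: valid_def a_def b_def)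
    have V: "valid w k S (\<lambda>i. if m < i then swc a b (c i) else c i)"
    proof (rule recolor[OF v ak ab])
      fix i j assume h: "i \<in> S" "j \<in> S" "i \<le> m" "m < j" "c i = a" "c j = b"
      have "w!i \<le> w!m"
        using h vv[of i m] bad by (cases "i = m") (auto simp: a_def)
      moreover have "j \<noteq> Suc m" using h bad ab by (auto simp: a_def)
      then have "w!(Suc (Suc m)) \<le> w!j"
        using h vv[of "Suc (Suc m)" j] True by (cases "j = Suc (Suc m)") (auto simp: b_def)
      ultimately show "w!i < w!j" using xy by simp
    next
      fix i j assume h: "i \<in> S" "j \<in> S" "i \<le> m" "m < j" "c i = b" "c j = a"
      have "i \<noteq> m" using h ab by (auto simp: a_def)
      then have "w!i < w!(Suc (Suc m))"
        using h vv[of i "Suc (Suc m)"] True by (auto simp: b_def)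
      moreover have "j \<noteq> Suc (Suc m)" using h ab by (auto simp: b_def)
      then have "w!(Suc m) \<le> w!j"
        using h vv[of "Suc m" j] bad by (cases "j = Suc m") (auto simp: a_def)
      ultimately show "w!i < w!j" using yz by simp
    qed
    moreover have "(\<lambda>i. if m < i then swc a b (c i) else c i) m \<noteq>
                   (\<lambda>i. if m < i then swc a b (c i) else c i) (Suc m)"
      using bad ab by (simp add: swc_def a_def)
    ultimately show ?thesis by (intro exI[of _ S] exI[of _ "(\<lambda>i. if m < i then swc a b (c i) else c i)"]) simp
  qed
qed

lemma swap_nth_gen:
  assumes "i < length (al @ [u1,u2,u3] @ be)"
  shows "(al @ [u1,u3,u2] @ be) ! i = (al @ [u1,u2,u3] @ be) ! (sw (Suc (length al)) i)"
  using assms by (auto simp: sw_def nth_append nth_Cons' split: if_splits)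

lemma swap_nth_gen2:
  assumes "i < length (al @ [u1,u2,u3] @ be)"
  shows "(al @ [u2,u1,u3] @ be) ! i = (al @ [u1,u2,u3] @ be) ! (sw (length al) i)"
  using assms by (auto simp: sw_def nth_append nth_Cons' split: if_splits)

lemma e_sym:
  assumes "length w' = length w" "Suc p < length w" "\<forall>i<length w. w'!i = w!(sw p i)"
  shows "\<forall>i<length w'. w!i = w'!(sw p i)"
proof (intro allI impI)
  fix i assume "i < length w'"
  then have "sw p i < length w" using assms sw_lt by auto
  then show "w!i = w'!(sw p i)" using assms(3) by simp
qed

lemma kmove_G: "kmove a b \<Longrightarrow> G k a = G k b"
proof (induction rule: kmove.induct)
  case (k1 x y z al be)
  define m where "m = length al"
  define A where "A = al @ [y,x,z] @ be"
  define B where "B = al @ [y,z,x] @ be"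
  have na: "A!m = y" "A!(Suc m) = x" "A!(Suc (Suc m)) = z"
    by (simp_all add: m_def A_def nth_append)
  have nb: "B!(Suc m) = z" "B!(Suc (Suc m)) = x"
    by (simp_all add: m_def B_def nth_append)
  have len: "length B = length A" "Suc (Suc m) < length A" by (simp_all add: A_def B_def m_def)
  have e: "\<forall>i<length A. B!i = A!(sw (Suc m) i)"
    unfolding A_def B_def m_def using swap_nth_gen[of _ al y x z be] by simp
  have e2: "\<forall>i<length B. A!i = B!(sw (Suc m) i)" using e_sym[OF len(1) _ e] len by simp
  have "G k A \<le> G k B"
    by (rule transport_G[OF _ len(1) _ e]) (use fix1[of m A] na k1 len in auto)
  moreover have "G k B \<le> G k A"
    by (rule transport_G[OF _ _ _ e2]) (use fix_trivial[of B "Suc m"] nb k1 len in auto)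
  ultimately show ?case unfolding A_def B_def by simp
next
  case (k2 x y z al be)
  define m where "m = length al"
  define A where "A = al @ [x,z,y] @ be"
  define B where "B = al @ [z,x,y] @ be"
  have na: "A!m = x" "A!(Suc m) = z" "A!(Suc (Suc m)) = y"
    by (simp_all add: m_def A_def nth_append)
  have nb: "B!m = z" "B!(Suc m) = x"
    by (simp_all add: m_def B_def nth_append)
  have len: "length B = length A" "Suc (Suc m) < length A" by (simp_all add: A_def B_def m_def)
  have e: "\<forall>i<length A. B!i = A!(sw m i)"
    unfolding A_def B_def m_def using swap_nth_gen2[of _ al x z y be] by simp
  have e2: "\<forall>i<length B. A!i = B!(sw m i)" using e_sym[OF len(1) _ e] len by simp
  have "G k A \<le> G k B"
    by (rule transport_G[OF _ len(1) _ e]) (use fix2[of m A] na k2 len in auto)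
  moreover have "G k B \<le> G k A"
    by (rule transport_G[OF _ _ _ e2]) (use fix_trivial[of B m] nb k2 len in auto)
  ultimately show ?case unfolding A_def B_def by simp
qed

lemma keq_G: "keq a b \<Longrightarrow> G k a = G k b"
  unfolding keq_def
  by (induction rule: rtranclp_induct) (auto dest: kmove_G[where k=k])

fun lam :: "nat \<Rightarrow> int list list \<Rightarrow> nat" where
  "lam 0 T = 0"
| "lam (Suc k) [] = 0"
| "lam (Suc k) (r # rs) = length r + lam k rs"

lemma readw_Cons[simp]: "readw (r # rs) = readw rs @ r" by (simp add: readw_def)
lemma readw_Nil[simp]: "readw [] = []" by (simp add: readw_def)

lemma G_append_row:
  assumes sr: "sorted_wrt (<) r"
  shows "G k u + length r \<le> G (Suc k) (u @ r)"
proof -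
  obtain S c where Sc: "valid u k S c" "card S = G k u" using G_ex by blast
  define S' where "S' = S \<union> {length u..<length u + length r}"
  define c' where "c' = (\<lambda>i. if i < length u then c i else k)"
  have Su: "S \<subseteq> {..<length u}" using Sc by (simp add: valid_def)
  have "valid (u @ r) (Suc k) S' c'"
    unfolding valid_def
  proof (intro conjI ballI impI)
    show "S' \<subseteq> {..<length (u @ r)}" using Su by (auto simp: S'_def)
  next
    fix i assume "i \<in> S'"
    then show "c' i < Suc k" using Sc Su by (auto simp: S'_def c'_def valid_def)
  next
    fix i j assume ij: "i \<in> S'" "j \<in> S'" "i < j \<and> c' i = c' j"
    show "(u @ r) ! i < (u @ r) ! j"
    proof (cases "j < length u")
      case True
      then have "i < length u" using ij by simp
      then have "i \<in> S" "j \<in> S" "c i = c j" using ij True by (auto simp: S'_def c'_def)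
      then have "u!i < u!j" using Sc(1) ij unfolding valid_def by blast
      then show ?thesis using True \<open>i < length u\<close> by (simp add: nth_append)
    next
      case False
      have "\<not> i < length u"
      proof
        assume "i < length u"
        then have "i \<in> S" using ij by (auto simp: S'_def)
        then have "c i < k" using Sc by (auto simp: valid_def)
        then show False using ij \<open>i < length u\<close> False by (simp add: c'_def)
      qed
      then have "j - length u < length r" "i - length u < j - length u"
        using ij False Su by (auto simp: S'_def)
      then have "r!(i - length u) < r!(j - length u)" using sr by (simp add: sorted_wrt_iff_nth_less)
      then show ?thesis using False \<open>\<not> i < length u\<close> by (simp add: nth_append)
    qed
  qed
  then have "card S' \<le> G (Suc k) (u @ r)" by (rule G_ge)
  moreover have "card S' = card S + length r"
  proof -
    have "finite S" using Su finite_subset by blast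
    moreover have "S \<inter> {length u..<length u + length r} = {}" using Su by auto
    ultimately show ?thesis unfolding S'_def by (simp add: card_Un_disjoint)
  qed
  ultimately show ?thesis using Sc by simp
qed

lemma lam_le_G: "tab T \<Longrightarrow> lam k T \<le> G k (readw T)"
proof (induction T arbitrary: k)
  case Nil then show ?case by (cases k) auto
next
  case (Cons r rs)
  show ?case
  proof (cases k)
    case 0 then show ?thesis by simp
  next
    case (Suc k')
    have "lam k' rs \<le> G k' (readw rs)" using Cons by simp
    then have "lam k (r # rs) \<le> G k' (readw rs) + length r" using Suc by simp
    also have "\<dots> \<le> G k (readw (r # rs))" using G_append_row[of r k' "readw rs"] Cons.prems Suc by simp
    finally show ?thesis .
  qed
qed

fun rowf :: "int list list \<Rightarrow> nat \<Rightarrow> nat" where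
  "rowf [] q = 0"
| "rowf (r # rs) q = (if q < length (readw rs) then Suc (rowf rs q) else 0)"

fun colf :: "int list list \<Rightarrow> nat \<Rightarrow> nat" where
  "colf [] q = q"
| "colf (r # rs) q = (if q < length (readw rs) then colf rs q else q - length (readw rs))"

fun cnt :: "int list list \<Rightarrow> nat \<Rightarrow> nat" where
  "cnt [] j = 0"
| "cnt (r # rs) j = (if j < length r then 1 else 0) + cnt rs j"

lemma L1: "q < length (readw T) \<Longrightarrow> rowf T q < length T \<and> colf T q < length (T ! rowf T q)
   \<and> readw T ! q = T ! rowf T q ! colf T q"
  by (induction T) (auto simp: nth_append)

lemma chain: "tab (r # rs) \<Longrightarrow> i < length rs \<Longrightarrow> length (rs!i) \<le> length r \<and>
   (\<forall>j < length (rs!i). r!j < rs!i!j)"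
proof (induction rs arbitrary: r i)
  case Nil then show ?case by simp
next
  case (Cons r2 rs)
  show ?case
  proof (cases i)
    case 0 then show ?thesis using Cons.prems by simp
  next
    case (Suc i')
    have IH: "length (rs!i') \<le> length r2 \<and> (\<forall>j < length (rs!i'). r2!j < rs!i'!j)"
      using Cons.IH[of r2 i'] Cons.prems Suc by simp
    have ab: "length r2 \<le> length r" "\<forall>j<length r2. r!j < r2!j" using Cons.prems by auto
    have e: "(r2 # rs) ! i = rs ! i'" using Suc by simp
    have "\<forall>j<length (rs ! i'). r ! j < rs ! i' ! j"
    proof (intro allI impI)
      fix j assume "j < length (rs ! i')"
      then have "j < length r2" "r2!j < rs!i'!j" using IH by auto
      then show "r ! j < rs ! i' ! j" using ab by (meson less_trans)
    qed
    then show ?thesis unfolding e using IH ab by simp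
  qed
qed

lemma L2: "tab T \<Longrightarrow> q < q' \<Longrightarrow> q' < length (readw T) \<Longrightarrow> colf T q = colf T q'
   \<Longrightarrow> readw T ! q' < readw T ! q"
proof (induction T)
  case Nil then show ?case by simp
next
  case (Cons r rs)
  define L where "L = length (readw rs)"
  show ?case
  proof (cases "q' < L")
    case True
    then have "readw rs ! q' < readw rs ! q" using Cons by (simp add: L_def)
    then show ?thesis using True Cons.prems(2) by (simp add: nth_append L_def)
  next
    case False
    show ?thesis
    proof (cases "q < L")
      case True
      define j where "j = q' - L"
      have cq: "colf rs q = j" using Cons.prems(4) True False by (simp add: L_def j_def)
      have l1: "rowf rs q < length rs" "colf rs q < length (rs ! rowf rs q)"
          "readw rs ! q = rs ! rowf rs q ! colf rs q" using L1[of q rs] True by (auto simp: L_def)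
      have "r!j < rs ! rowf rs q ! j" using chain[OF Cons.prems(1) l1(1)] l1(2) cq by simp
      moreover have "readw (r # rs) ! q' = r!j" using False by (simp add: nth_append L_def j_def)
      moreover have "readw (r # rs) ! q = rs ! rowf rs q ! j" using True l1 cq by (simp add: nth_append L_def)
      ultimately show ?thesis by simp
    next
      case False
      then show ?thesis using Cons.prems \<open>\<not> q' < L\<close> by (simp add: L_def)
    qed
  qed
qed

lemma L3: "card {q. q < length (readw T) \<and> colf T q = j} = cnt T j"
proof (induction T)
  case Nil then show ?case by simp
next
  case (Cons r rs)
  define L where "L = length (readw rs)"
  have eq: "{q. q < length (readw (r # rs)) \<and> colf (r # rs) q = j} =
      {q. q < L \<and> colf rs q = j} \<union> (if j < length r then {L + j} else {})"
    by (auto simp: L_def)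
  have "card ({q. q < L \<and> colf rs q = j} \<union> (if j < length r then {L + j} else {})) =
        card {q. q < L \<and> colf rs q = j} + (if j < length r then 1 else 0)"
    by (auto simp: card_insert_if)
  then show ?case using eq Cons by (simp add: L_def)
qed

lemma cnt_zero: "tab (r # rs) \<Longrightarrow> length r \<le> j \<Longrightarrow> cnt rs j = 0"
proof -
  assume t: "tab (r # rs)" and j: "length r \<le> j"
  have "\<forall>i<length rs. length (rs!i) \<le> j" using chain[OF t] j by fastforce
  then show "cnt rs j = 0"
  proof (induction rs)
    case Nil then show ?case by simp
  next
    case (Cons a rs) then show ?case by fastforce
  qed
qed

lemma L4: "tab T \<Longrightarrow> (\<forall>r\<in>set T. length r \<le> N) \<Longrightarrow> (\<Sum>j<N. min k (cnt T j)) = lam k T"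
proof (induction T arbitrary: k)
  case Nil then show ?case by (cases k) auto
next
  case (Cons r rs)
  show ?case
  proof (cases k)
    case 0 then show ?thesis by simp
  next
    case (Suc k')
    have "\<And>j. min k (cnt (r # rs) j) = (if j < length r then 1 else 0) + min k' (cnt rs j)"
      using cnt_zero[OF Cons.prems(1)] Suc by (auto simp: not_less)
    then have "(\<Sum>j<N. min k (cnt (r # rs) j)) = (\<Sum>j<N. (if j < length r then 1 else 0)) + (\<Sum>j<N. min k' (cnt rs j))"
      by (simp add: sum.distrib)
    also have "(\<Sum>j<N. (if j < length r then 1 else 0::nat)) = length r"
    proof -
      have "length r \<le> N" using Cons.prems by simp
      then have "{..<N} \<inter> {j. j < length r} = {..<length r}" by auto
      then show ?thesis by (simp add: sum.If_cases)
    qed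
    also have "(\<Sum>j<N. min k' (cnt rs j)) = lam k' rs" using Cons by simp
    finally show ?thesis using Suc by simp
  qed
qed

lemma row_le: "r \<in> set T \<Longrightarrow> length r \<le> length (readw T)"
  by (induction T) auto

lemma G_le_lam:
  assumes t: "tab T"
  shows "G k (readw T) \<le> lam k T"
proof -
  obtain S c where Sc: "valid (readw T) k S c" "card S = G k (readw T)" using G_ex by blast
  define N where "N = length (readw T)"
  have SN: "S \<subseteq> {..<N}" using Sc by (simp add: valid_def N_def)
  have fin: "finite S" using SN finite_subset by blast
  have colN: "\<And>q. q \<in> S \<Longrightarrow> colf T q < N"
  proof -
    fix q assume "q \<in> S"
    then have q: "q < N" using SN by auto
    then have "colf T q < length (T ! rowf T q)" "rowf T q < length T" using L1[of q T] by (auto simp: N_def)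
    moreover have "length (T ! rowf T q) \<le> N"
    proof -
      have "T ! rowf T q \<in> set T" using \<open>rowf T q < length T\<close> by simp
      then show ?thesis unfolding N_def by (rule row_le)
    qed
    ultimately show "colf T q < N" by simp
  qed
  have bound: "\<And>j. card {q\<in>S. colf T q = j} \<le> min k (cnt T j)"
  proof -
    fix j
    have "inj_on c {q\<in>S. colf T q = j}"
    proof (rule inj_onI)
      fix a b assume ab: "a \<in> {q\<in>S. colf T q = j}" "b \<in> {q\<in>S. colf T q = j}" "c a = c b"
      show "a = b"
      proof (rule ccontr)
        assume "a \<noteq> b"
        then consider "a < b" | "b < a" by linarith
        then show False
        proof cases
          case 1
          have "readw T ! a < readw T ! b" using valid_pair[OF Sc(1), of a b] ab 1 by auto
          moreover have "readw T ! b < readw T ! a" using L2[OF t 1] ab SN by (auto simp: N_def)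
          ultimately show False by simp
        next
          case 2
          have "readw T ! b < readw T ! a" using valid_pair[OF Sc(1), of b a] ab 2 by auto
          moreover have "readw T ! a < readw T ! b" using L2[OF t 2] ab SN by (auto simp: N_def)
          ultimately show False by simp
        qed
      qed
    qed
    moreover have "c ` {q\<in>S. colf T q = j} \<subseteq> {..<k}" using Sc by (auto simp: valid_def)
    ultimately have "card {q\<in>S. colf T q = j} \<le> card {..<k}"
      by (intro card_inj_on_le) auto
    then have 1: "card {q\<in>S. colf T q = j} \<le> k" by simp
    have "{q\<in>S. colf T q = j} \<subseteq> {q. q < length (readw T) \<and> colf T q = j}" using SN by (auto simp: N_def)
    moreover have "finite {q. q < length (readw T) \<and> colf T q = j}"
      by (rule finite_subset[of _ "{..<length (readw T)}"]) auto
    ultimately have "card {q\<in>S. colf T q = j} \<le> card {q. q < length (readw T) \<and> colf T q = j}"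
      by (intro card_mono) auto
    then have "card {q\<in>S. colf T q = j} \<le> cnt T j" using L3[of T j] by simp
    then show "card {q\<in>S. colf T q = j} \<le> min k (cnt T j)" using 1 by simp
  qed
  have "card S = (\<Sum>j<N. card {q\<in>S. colf T q = j})"
  proof -
    have "(\<Sum>j\<in>{..<N}. \<Sum>x | x \<in> S \<and> colf T x = j. (1::nat)) = (\<Sum>x\<in>S. 1)"
      by (rule sum.group[OF fin]) (use colN in auto)
    then show ?thesis by simp
  qed
  also have "\<dots> \<le> (\<Sum>j<N. min k (cnt T j))" by (rule sum_mono) (use bound in auto)
  also have "\<dots> = lam k T"
  proof (rule L4[OF t])
    show "\<forall>r\<in>set T. length r \<le> N" unfolding N_def using row_le by blast
  qed
  finally show ?thesis using Sc by simp
qed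

lemma G_tab: "tab T \<Longrightarrow> G k (readw T) = lam k T"
  using G_le_lam lam_le_G le_antisym by blast

definition tau :: "int \<Rightarrow> int" where
  "tau v = (if v = 1 then -1 else if v = -1 then 1 else v)"

lemma tau_back: "u \<noteq> 0 \<Longrightarrow> v \<noteq> 0 \<Longrightarrow> \<not> (u = 1 \<and> v = -1) \<Longrightarrow> u \<noteq> v \<Longrightarrow> tau u < tau v \<Longrightarrow> u < v"
  unfolding tau_def by (auto split: if_splits)

lemma tau_fwd: "u \<noteq> 0 \<Longrightarrow> v \<noteq> 0 \<Longrightarrow> \<not> (u = -1 \<and> v = 1) \<Longrightarrow> u < v \<Longrightarrow> tau u < tau v"
  unfolding tau_def by (auto split: if_splits)

lemma G_tau_le:
  assumes d: "distinct w" and z: "0 \<notin> set w" and pq: "p < q" "q < length w" "w!p = -1" "w!q = 1"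
  shows "G k (map tau w) \<le> G k w"
proof -
  obtain S c where Sc: "valid (map tau w) k S c" "card S = G k (map tau w)" using G_ex by blast
  have "valid w k S c"
    unfolding valid_def
  proof (intro conjI ballI impI)
    show "S \<subseteq> {..<length w}" using Sc by (simp add: valid_def)
  next
    fix i assume "i \<in> S" then show "c i < k" using Sc by (simp add: valid_def)
  next
    fix i j assume ij: "i \<in> S" "j \<in> S" "i < j \<and> c i = c j"
    have l: "i < length w" "j < length w" using Sc ij by (auto simp: valid_def)
    have "map tau w ! i < map tau w ! j" using valid_pair[OF Sc(1), of i j] ij by auto
    then have tt: "tau (w!i) < tau (w!j)" using l by simp
    have nz: "w!i \<noteq> 0" "w!j \<noteq> 0" using z l by (auto dest: nth_mem)
    have ne: "w!i \<noteq> w!j" using d l ij by (simp add: nth_eq_iff_index_eq)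
    have "\<not> (w!i = 1 \<and> w!j = -1)"
    proof
      assume h: "w!i = 1 \<and> w!j = -1"
      then have "i = q" using nth_eq_iff_index_eq[OF d l(1) pq(2)] pq by simp
      moreover have "j = p" using h nth_eq_iff_index_eq[OF d l(2), of p] pq by simp
      ultimately show False using ij pq by simp
    qed
    then show "w!i < w!j" using tau_back[OF nz _ ne tt] by simp
  qed
  then show ?thesis using G_ge Sc by fastforce
qed

lemma G_tau_ge:
  assumes d: "distinct w" and z: "0 \<notin> set w" and pq: "p < q" "q < length w" "w!p = -1" "w!q = 1"
  shows "G k w \<le> G k (map tau w) + 1"
proof -
  obtain S c where Sc: "valid w k S c" "card S = G k w" using G_ex by blast
  have "valid (map tau w) k (S - {q}) c"
    unfolding valid_def
  proof (intro conjI ballI impI)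
    show "S - {q} \<subseteq> {..<length (map tau w)}" using Sc by (auto simp: valid_def)
  next
    fix i assume "i \<in> S - {q}" then show "c i < k" using Sc by (simp add: valid_def)
  next
    fix i j assume ij: "i \<in> S - {q}" "j \<in> S - {q}" "i < j \<and> c i = c j"
    have l: "i < length w" "j < length w" using Sc ij by (auto simp: valid_def)
    have lt: "w!i < w!j" using valid_pair[OF Sc(1), of i j] ij by auto
    have nz: "w!i \<noteq> 0" "w!j \<noteq> 0" using z l by (auto dest: nth_mem)
    have "w!j \<noteq> 1"
    proof
      assume "w!j = 1" then have "j = q" using nth_eq_iff_index_eq[OF d l(2) pq(2)] pq by simp
      then show False using ij by simp
    qed
    then have "tau (w!i) < tau (w!j)" using tau_fwd[OF nz _ lt] by auto
    then show "map tau w ! i < map tau w ! j" using l by simp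
  qed
  then have "card (S - {q}) \<le> G k (map tau w)" by (rule G_ge)
  moreover have "card S \<le> card (S - {q}) + 1" by (simp add: card_Diff_singleton_if; arith)
  ultimately show ?thesis using Sc by simp
qed

lemma lam_Suc: "lam (Suc k) T = lam k T + (if k < length T then length (T!k) else 0)"
proof (induction k arbitrary: T)
  case 0 then show ?case by (cases T) auto
next
  case (Suc k) then show ?case by (cases T) auto
qed

lemma a_lam: "a_sum k y = lam k (rs_tableau (neg_double y))"
proof (induction k)
  case 0 then show ?case by (simp add: a_sum_def)
next
  case (Suc k)
  have "a_sum (Suc k) y = a_sum k y + p_shape (neg_double y) (Suc k)"
    by (simp add: a_sum_def)
  then show ?case using Suc by (simp add: lam_Suc p_shape_def Let_def)
qed

lemma lam_G: "distinct w \<Longrightarrow> lam k (rs_tableau w) = G k w"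
  using rs_invariant[of w] G_tab[of "rs_tableau w" k] keq_G[of "readw (rs_tableau w)" w k] by simp

lemma lam_sum: "lam m T = (\<Sum>i<min m (length T). length (T!i))"
proof (induction m arbitrary: T)
  case 0 then show ?case by simp
next
  case (Suc m)
  show ?case
  proof (cases T)
    case Nil then show ?thesis by simp
  next
    case (Cons r rs)
    have "(\<Sum>i<min (Suc m) (length T). length (T!i)) = (\<Sum>i<Suc (min m (length rs)). length (T!i))"
      using Cons by simp
    also have "\<dots> = length (T!0) + (\<Sum>i<min m (length rs). length (T!(Suc i)))"
      by (subst sum.lessThan_Suc_shift) simp
    also have "\<dots> = length r + lam m rs" using Suc[of rs] Cons by simp
    finally show ?thesis using Cons by simp
  qed
qed

lemma card_sum_if: "card {i. i < (L::nat) \<and> P i} = (\<Sum>i<L. if P i then 1 else (0::nat))"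
proof -
  have "(\<Sum>i<L. if P i then 1 else (0::nat)) = (\<Sum>i\<in>{i\<in>{..<L}. P i}. 1)"
    by (rule sum.inter_filter[symmetric]) simp
  moreover have "{i\<in>{..<L}. P i} = {i. i < L \<and> P i}" by auto
  ultimately show ?thesis by simp
qed

lemma b_B: "b_sum c y = (\<Sum>i<length (rs_tableau (neg_double y)). min c (length (rs_tableau (neg_double y) ! i)))"
proof -
  define T where "T = rs_tableau (neg_double y)"
  define L where "L = length T"
  have q: "\<And>j. j \<in> {1..c} \<Longrightarrow> q_shape (neg_double y) j = (\<Sum>i<L. if j \<le> length (T!i) then 1 else 0)"
  proof -
    fix j assume j: "j \<in> {1..c}"
    have "{i. 1 \<le> i \<and> j \<le> p_shape (neg_double y) i} = Suc ` {i. i < L \<and> j \<le> length (T!i)}"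
    proof (rule set_eqI, rule iffI)
      fix i assume "i \<in> {i. 1 \<le> i \<and> j \<le> p_shape (neg_double y) i}"
      then have h: "1 \<le> i" "j \<le> p_shape (neg_double y) i" by auto
      then have "i \<le> L" "j \<le> length (T!(i - 1))" using j
        by (auto simp: p_shape_def Let_def T_def L_def split: if_splits)
      then show "i \<in> Suc ` {i. i < L \<and> j \<le> length (T!i)}" using h(1)
        by (intro image_eqI[of _ _ "i - 1"]) auto
    next
      fix i assume "i \<in> Suc ` {i. i < L \<and> j \<le> length (T!i)}"
      then obtain i' where "i = Suc i'" "i' < L" "j \<le> length (T!i')" by auto
      then show "i \<in> {i. 1 \<le> i \<and> j \<le> p_shape (neg_double y) i}"
        by (auto simp: p_shape_def Let_def T_def L_def)
    qed
    then have "card {i. 1 \<le> i \<and> j \<le> p_shape (neg_double y) i} = card {i. i < L \<and> j \<le> length (T!i)}"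
      by (simp add: card_image)
    then show "q_shape (neg_double y) j = (\<Sum>i<L. if j \<le> length (T!i) then 1 else 0)"
      using j by (simp add: q_shape_def card_sum_if)
  qed
  have "b_sum c y = (\<Sum>j\<in>{1..c}. \<Sum>i<L. if j \<le> length (T!i) then 1 else (0::nat))"
    unfolding b_sum_def using q by (rule sum.cong[OF refl])
  also have "\<dots> = (\<Sum>i<L. \<Sum>j\<in>{1..c}. if j \<le> length (T!i) then 1 else (0::nat))"
    by (rule sum.swap)
  also have "\<dots> = (\<Sum>i<L. min c (length (T!i)))"
  proof (rule sum.cong[OF refl])
    fix i
    have "(\<Sum>j\<in>{1..c}. if j \<le> length (T!i) then 1 else (0::nat)) = (\<Sum>j\<in>{j\<in>{1..c}. j \<le> length (T!i)}. 1)"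
      by (rule sum.inter_filter[symmetric]) simp
    moreover have "{j\<in>{1..c}. j \<le> length (T!i)} = {1..min c (length (T!i))}" by auto
    ultimately show "(\<Sum>j\<in>{1..c}. if j \<le> length (T!i) then 1 else (0::nat)) = min c (length (T!i))"
      by simp
  qed
  finally show ?thesis by (simp add: T_def L_def)
qed

definition BB :: "nat \<Rightarrow> int list list \<Rightarrow> nat" where
  "BB c T = (\<Sum>i<length T. min c (length (T!i)))"
definition NN :: "int list list \<Rightarrow> nat" where
  "NN T = (\<Sum>i<length T. length (T!i))"

lemma split_sum: "(m::nat) \<le> L \<Longrightarrow> (\<Sum>i<L. f i) = (\<Sum>i<m. f i) + (\<Sum>i\<in>{m..<L}. (f i :: nat))"
  using sum.atLeastLessThan_concat[of 0 m L f] by (simp add: atLeast0LessThan)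

lemma B_bound: "BB c T + lam m T \<le> m * c + NN T"
proof -
  define m' where "m' = min m (length T)"
  have m'L: "m' \<le> length T" by (simp add: m'_def)
  have 1: "BB c T = (\<Sum>i<m'. min c (length (T!i))) + (\<Sum>i\<in>{m'..<length T}. min c (length (T!i)))"
    unfolding BB_def by (rule split_sum[OF m'L])
  have 2: "NN T = (\<Sum>i<m'. length (T!i)) + (\<Sum>i\<in>{m'..<length T}. length (T!i))"
    unfolding NN_def by (rule split_sum[OF m'L])
  have 3: "(\<Sum>i<m'. min c (length (T!i))) \<le> m' * c"
    using sum_bounded_above[of "{..<m'}" "\<lambda>i. min c (length (T!i))" c] by simp
  have 4: "(\<Sum>i\<in>{m'..<length T}. min c (length (T!i))) \<le> (\<Sum>i\<in>{m'..<length T}. length (T!i))"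
    by (rule sum_mono) simp
  have 5: "m' * c \<le> m * c" by (simp add: m'_def)
  have "lam m T = (\<Sum>i<m'. length (T!i))" by (simp add: lam_sum m'_def)
  then show ?thesis using 1 2 3 4 5 by linarith
qed

lemma mono_len: "tab T \<Longrightarrow> i \<le> j \<Longrightarrow> j < length T \<Longrightarrow> length (T!j) \<le> length (T!i)"
proof (induction T arbitrary: i j)
  case Nil then show ?case by simp
next
  case (Cons r rs)
  show ?case
  proof (cases i)
    case 0
    show ?thesis
    proof (cases j)
      case 0 then show ?thesis using \<open>i = 0\<close> by simp
    next
      case (Suc j')
      then show ?thesis using chain[OF Cons.prems(1), of j'] Cons.prems \<open>i = 0\<close> by simp
    qed
  next
    case (Suc i')
    then obtain j' where "j = Suc j'" using Cons.prems by (cases j) auto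
    then show ?thesis using Cons.IH[of i' j'] Cons.prems Suc by simp
  qed
qed

lemma B_eq:
  assumes t: "tab T"
  shows "\<exists>m0. BB c T + lam m0 T = m0 * c + NN T"
proof -
  define m0 where "m0 = length (takeWhile (\<lambda>r. c \<le> length r) T)"
  have m0L: "m0 \<le> length T" by (simp add: m0_def length_takeWhile_le)
  have a: "\<forall>i<m0. c \<le> length (T!i)"
  proof (intro allI impI)
    fix i assume "i < m0"
    then have "takeWhile (\<lambda>r. c \<le> length r) T ! i \<in> set (takeWhile (\<lambda>r. c \<le> length r) T)"
      by (simp add: m0_def)
    moreover have "takeWhile (\<lambda>r. c \<le> length r) T ! i = T!i" using \<open>i < m0\<close>
      by (simp add: m0_def takeWhile_nth)
    ultimately show "c \<le> length (T!i)" by (metis set_takeWhileD)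
  qed
  have b: "\<forall>i. m0 \<le> i \<longrightarrow> i < length T \<longrightarrow> length (T!i) < c"
  proof (intro allI impI)
    fix i assume i: "m0 \<le> i" "i < length T"
    then have "m0 < length T" by simp
    then have "\<not> c \<le> length (T!m0)" unfolding m0_def by (rule nth_length_takeWhile[unfolded m0_def[symmetric]])
    moreover have "length (T!i) \<le> length (T!m0)" using mono_len[OF t i(1) i(2)] .
    ultimately show "length (T!i) < c" by simp
  qed
  have 1: "BB c T = (\<Sum>i<m0. min c (length (T!i))) + (\<Sum>i\<in>{m0..<length T}. min c (length (T!i)))"
    unfolding BB_def by (rule split_sum[OF m0L])
  have 2: "NN T = (\<Sum>i<m0. length (T!i)) + (\<Sum>i\<in>{m0..<length T}. length (T!i))"
    unfolding NN_def by (rule split_sum[OF m0L])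
  have 3: "(\<Sum>i<m0. min c (length (T!i))) = m0 * c"
    using a by (simp add: min_def)
  have 4: "(\<Sum>i\<in>{m0..<length T}. min c (length (T!i))) = (\<Sum>i\<in>{m0..<length T}. length (T!i))"
    by (rule sum.cong[OF refl]) (use b in \<open>auto simp: min_def\<close>)
  have "lam m0 T = (\<Sum>i<m0. length (T!i))" using m0L by (simp add: lam_sum min_def)
  then show ?thesis using 1 2 3 4 by (intro exI[of _ m0]) linarith
qed

lemma NN_len: "NN T = length (concat T)"
proof (induction T)
  case Nil then show ?case by (simp add: NN_def)
next
  case (Cons r rs)
  have "NN (r # rs) = (\<Sum>i<Suc (length rs). length ((r # rs) ! i))" by (simp add: NN_def)
  also have "\<dots> = length r + (\<Sum>i<length rs. length (rs ! i))" by (subst sum.lessThan_Suc_shift) simp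
  finally show ?case using Cons by (simp add: NN_def)
qed

lemma nd_facts:
  assumes z: "0 \<notin> set x" and d: "distinct (map abs x)" and o: "1 \<in> set x"
  shows "distinct (neg_double x)" "0 \<notin> set (neg_double x)"
    "neg_double (flip_one x) = map tau (neg_double x)"
    "\<exists>p q. p < q \<and> q < length (neg_double x) \<and> neg_double x ! p = -1 \<and> neg_double x ! q = 1"
proof -
  have dx: "distinct x" and inj: "inj_on abs (set x)" using d by (auto simp: distinct_map)
  have disj: "set (map uminus (rev x)) \<inter> set x = {}"
  proof (rule ccontr)
    assume "set (map uminus (rev x)) \<inter> set x \<noteq> {}"
    then obtain a where a: "a \<in> set x" "- a \<in> set x" by auto
    then have "- a = a" using inj_onD[OF inj _ a(2) a(1)] by simp
    then have "a = 0" by simp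
    then show False using a z by simp
  qed
  have "distinct (map uminus (rev x))" using dx by (simp add: distinct_map inj_on_def)
  then show "distinct (neg_double x)" using dx disj by (simp add: neg_double_def)
  show "0 \<notin> set (neg_double x)" using z by (auto simp: neg_double_def)
  have m1: "-1 \<notin> set x"
  proof
    assume "-1 \<in> set x"
    then have "(-1::int) = 1" using inj_onD[OF inj _ \<open>-1 \<in> set x\<close> o] by simp
    then show False by simp
  qed
  have e1: "\<And>v. v \<in> set x \<Longrightarrow> tau (- v) = - (if v = 1 then -1 else v)"
    using m1 by (auto simp: tau_def)
  have e2: "\<And>v. v \<in> set x \<Longrightarrow> tau v = (if v = 1 then -1 else v)"
    using m1 by (auto simp: tau_def)
  show "neg_double (flip_one x) = map tau (neg_double x)"
    unfolding neg_double_def flip_one_def using e1 e2 by (simp add: rev_map)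
  obtain i where i: "i < length x" "x!i = 1" using o by (auto simp: in_set_conv_nth)
  define p where "p = length x - 1 - i"
  define q where "q = length x + i"
  have pl: "p < length x" using i by (simp add: p_def)
  have "neg_double x ! p = - (rev x ! p)" using pl by (simp add: neg_double_def nth_append)
  also have "rev x ! p = x ! i" using i by (simp add: rev_nth p_def)
  finally have np: "neg_double x ! p = -1" using i by simp
  have nq: "neg_double x ! q = 1" using i by (simp add: neg_double_def nth_append q_def)
  show "\<exists>p q. p < q \<and> q < length (neg_double x) \<and> neg_double x ! p = -1 \<and> neg_double x ! q = 1"
    using np nq i by (intro exI[of _ p] exI[of _ q]) (auto simp: p_def q_def neg_double_def)
qed

theorem mainTheorem5:
  fixes x :: "int list" and k :: nat
  assumes "0 \<notin> set x"
    and "distinct (map abs x)"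
    and "1 \<in> set x"
    and "k \<ge> 1"
  shows "int (a_sum k x) - int (a_sum k (flip_one x)) \<in> {0, 1}
       \<and> int (b_sum k x) - int (b_sum k (flip_one x)) \<in> {0, -1}"
proof -
  define w where "w = neg_double x"
  note F = nd_facts[OF assms(1-3), folded w_def]
  define w' where "w' = map tau w"
  have w'eq: "neg_double (flip_one x) = w'" using F(3) by (simp add: w'_def)
  obtain p q where pq: "p < q" "q < length w" "w!p = -1" "w!q = 1" using F(4) by blast
  have dw': "distinct w'" using F(1) unfolding w'_def
    by (simp add: distinct_map inj_on_def tau_def split: if_splits)
  have Gle: "\<And>m. G m w' \<le> G m w" using G_tau_le[OF F(1) F(2) pq] by (simp add: w'_def)
  have Gge: "\<And>m. G m w \<le> G m w' + 1" using G_tau_ge[OF F(1) F(2) pq] by (simp add: w'_def)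
  define T where "T = rs_tableau w"
  define T' where "T' = rs_tableau w'"
  have lT: "\<And>m. lam m T = G m w" using lam_G[OF F(1)] by (simp add: T_def)
  have lT': "\<And>m. lam m T' = G m w'" using lam_G[OF dw'] by (simp add: T'_def)
  have a1: "a_sum k x = lam k T" by (simp add: a_lam T_def w_def)
  have a2: "a_sum k (flip_one x) = lam k T'" by (simp add: a_lam T'_def w'eq)
  have b1: "b_sum k x = BB k T" by (simp add: b_B BB_def T_def w_def)
  have b2: "b_sum k (flip_one x) = BB k T'" by (simp add: b_B BB_def T'_def w'eq)
  have inv: "tab T" "mset (concat T) = mset w" using rs_invariant[OF F(1)] by (auto simp: T_def)
  have inv': "tab T'" "mset (concat T') = mset w'" using rs_invariant[OF dw'] by (auto simp: T'_def)
  have NNe: "NN T = NN T'"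
    using mset_eq_length[OF inv(2)] mset_eq_length[OF inv'(2)] by (simp add: NN_len w'_def)
  obtain m0 where m0: "BB k T + lam m0 T = m0 * k + NN T" using B_eq[OF inv(1)] by blast
  obtain m1 where m1: "BB k T' + lam m1 T' = m1 * k + NN T'" using B_eq[OF inv'(1)] by blast
  have bd1: "BB k T' + lam m0 T' \<le> m0 * k + NN T'" by (rule B_bound)
  have bd2: "BB k T + lam m1 T \<le> m1 * k + NN T" by (rule B_bound)
  have "BB k T' \<le> BB k T + 1" using m0 bd1 NNe lT[of m0] lT'[of m0] Gle[of m0] Gge[of m0] by linarith
  moreover have "BB k T \<le> BB k T'" using m1 bd2 NNe lT[of m1] lT'[of m1] Gle[of m1] by linarith
  moreover have "lam k T' \<le> lam k T" "lam k T \<le> lam k T' + 1" using lT lT' Gle Gge by auto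
  ultimately have "int (a_sum k x) - int (a_sum k (flip_one x)) = 0 \<or> int (a_sum k x) - int (a_sum k (flip_one x)) = 1"
    "int (b_sum k x) - int (b_sum k (flip_one x)) = 0 \<or> int (b_sum k x) - int (b_sum k (flip_one x)) = -1"
    using a1 a2 b1 b2 by linarith+
  then show ?thesis by simp
qed

end
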